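(* Let $\mathcal{T}=(V,\mathsf{p})$ be a directed forest with leafless support $\mathring{\mathcal{T}}=(V,\mathring{\mathsf{p}})$. If $v\in V\setminus\mathrm{root}(\mathring{\mathcal{T}})$, then $\mathring{\mathsf{p}}^n(v)=\mathsf{p}^n(v)$ for all $n\in\{0,1,2,\dots\}$. Consequently, if two vertices $v_1,v_2\in V\setminus\mathrm{root}(\mathring{\mathcal{T}})$ belong to the same tree of $\mathcal{T}$, then they belong to the same tree of $\mathring{\mathcal{T}}$. In particular, if $\mathcal{T}$ is a directed tree, then $\mathring{\mathcal{T}}$ contains at most one non-degenerate tree.
   Context: A directed forest is a pair $\mathcal{T}=(V,\mathsf{p})$ where $V$ is a nonempty set and $\mathsf{p}\colon V\to V$ satisfies: if $n\in\mathbb{N}$, $v\in V$ and $\mathsf{p}^n(v)=v$, then $\mathsf{p}(v)=v$. Roots: $\mathrm{root}(\mathcal{T})=\{v:\mathsf{p}(v)=v\}$. The forest is leafless if $\mathsf{p}(V)=V$. The trees of $\mathcal{T}$ are the connected components of the graph on $V$ with edges $\{\mathsf{p}(u),u\}$, $u\notin\mathrm{root}(\mathcal{T})$ (equivalently, classes of $u\sim w$ iff $\mathsf{p}^m(u)=\mathsf{p}^n(w)$ for some $m,n\ge0$); a tree $W$ is degenerate if $W$ is a single vertex; a directed tree is a directed forest with exactly one tree. $(V,\mathsf{p}_1)$ is thinner than $(V,\mathsf{p}_2)$ if $\mathsf{p}_1(v)\in\{v,\mathsf{p}_2(v)\}$ for all $v$. The leafless support $\mathring{\mathcal{T}}$ is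 the greatest (thickest) leafless directed forest on $V$ thinner than $\mathcal{T}$; it exists. *)

theory Defs
  imports Main
begin

definition directed_forest :: "'a set \<Rightarrow> ('a \<Rightarrow> 'a) \<Rightarrow> bool" where
  "directed_forest V p \<longleftrightarrow> V \<noteq> {} \<and> (\<forall>v\<in>V. p v \<in> V) \<and>
     (\<forall>n::nat. \<forall>v\<in>V. n \<ge> 1 \<and> (p ^^ n) v = v \<longrightarrow> p v = v)"

definition roots :: "'a set \<Rightarrow> ('a \<Rightarrow> 'a) \<Rightarrow> 'a set" where
  "roots V p = {v\<in>V. p v = v}"

definition leafless :: "'a set \<Rightarrow> ('a \<Rightarrow> 'a) \<Rightarrow> bool" where
  "leafless V p \<longleftrightarrow> p ` V = V"

definition thinner :: "'a set \<Rightarrow> ('a \<Rightarrow> 'a) \<Rightarrow> ('a \<Rightarrow> 'a) \<Rightarrow> bool" where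
  "thinner V p1 p2 \<longleftrightarrow> (\<forall>v\<in>V. p1 v = v \<or> p1 v = p2 v)"

definition is_leafless_support :: "'a set \<Rightarrow> ('a \<Rightarrow> 'a) \<Rightarrow> ('a \<Rightarrow> 'a) \<Rightarrow> bool" where
  "is_leafless_support V p q \<longleftrightarrow>
     directed_forest V q \<and> leafless V q \<and> thinner V q p \<and>
     (\<forall>r. directed_forest V r \<and> leafless V r \<and> thinner V r p \<longrightarrow> thinner V r q)"

definition same_tree :: "('a \<Rightarrow> 'a) \<Rightarrow> 'a \<Rightarrow> 'a \<Rightarrow> bool" where
  "same_tree p u w \<longleftrightarrow> (\<exists>m n::nat. (p ^^ m) u = (p ^^ n) w)"

definition tree_of :: "'a set \<Rightarrow> ('a \<Rightarrow> 'a) \<Rightarrow> 'a \<Rightarrow> 'a set" where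
  "tree_of V p v = {w\<in>V. same_tree p v w}"

definition trees :: "'a set \<Rightarrow> ('a \<Rightarrow> 'a) \<Rightarrow> 'a set set" where
  "trees V p = tree_of V p ` V"

definition degenerate :: "'a set \<Rightarrow> bool" where
  "degenerate W \<longleftrightarrow> (\<exists>x. W = {x})"

definition directed_tree :: "'a set \<Rightarrow> ('a \<Rightarrow> 'a) \<Rightarrow> bool" where
  "directed_tree V p \<longleftrightarrow> directed_forest V p \<and> (\<exists>!W. W \<in> trees V p)"

end

theory Submission
  imports Defs
begin

lemma funpow_swap: "(f ^^ n) ((f ^^ k) w) = (f ^^ k) ((f ^^ n) w)"
  by (metis funpow_add add.commute comp_apply)

lemma funpow_fixpoint: "f x = x \<Longrightarrow> (f ^^ n) x = x"
  by (induction n) auto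

lemma st_refl: "same_tree p a a"
  unfolding same_tree_def by (rule exI[of _ 0], rule exI[of _ 0]) simp

lemma st_sym: "same_tree p a b \<Longrightarrow> same_tree p b a"
  unfolding same_tree_def by (blast intro: sym)

lemma st_trans: assumes "same_tree p a b" "same_tree p b c" shows "same_tree p a c"
proof -
  obtain m n where 1: "(p ^^ m) a = (p ^^ n) b" using assms(1) unfolding same_tree_def by blast
  obtain k l where 2: "(p ^^ k) b = (p ^^ l) c" using assms(2) unfolding same_tree_def by blast
  have "(p ^^ (k + m)) a = (p ^^ k) ((p ^^ n) b)" by (simp add: funpow_add 1)
  also have "\<dots> = (p ^^ n) ((p ^^ k) b)" by (rule funpow_swap)
  also have "\<dots> = (p ^^ n) ((p ^^ l) c)" by (simp add: 2)
  also have "\<dots> = (p ^^ (n + l)) c" by (simp add: funpow_add)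
  finally show ?thesis unfolding same_tree_def by blast
qed

lemma tree_of_eq: "same_tree p a b \<Longrightarrow> tree_of V p a = tree_of V p b"
proof -
  assume h: "same_tree p a b"
  have "same_tree p a w \<longleftrightarrow> same_tree p b w" for w
    using st_trans[OF h, of w] st_trans[OF st_sym[OF h], of w] by blast
  then show ?thesis unfolding tree_of_def by blast
qed

lemma key:
  assumes df: "directed_forest V p" and ls: "is_leafless_support V p q"
    and r: "r \<in> V" "q r = r" and v: "v \<in> V" "v \<noteq> r" "q v = r"
  shows "p r = r"
proof (rule ccontr)
  assume pr: "p r \<noteq> r"
  have qf: "directed_forest V q" and qth: "thinner V q p"
    and mx: "\<And>s. directed_forest V s \<and> leafless V s \<and> thinner V s p \<longrightarrow> thinner V s q"
    using ls unfolding is_leafless_support_def by auto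
  have pV: "\<And>x. x \<in> V \<Longrightarrow> p x \<in> V" and qV: "\<And>x. x \<in> V \<Longrightarrow> q x \<in> V"
    and Vne: "V \<noteq> {}"
    using df qf unfolding directed_forest_def by auto
  have pcyc: "\<And>n x. x \<in> V \<Longrightarrow> n \<ge> 1 \<Longrightarrow> (p ^^ n) x = x \<Longrightarrow> p x = x"
    using df unfolding directed_forest_def by blast
  have qcyc: "\<And>n x. x \<in> V \<Longrightarrow> n \<ge> 1 \<Longrightarrow> (q ^^ n) x = x \<Longrightarrow> q x = x"
    using qf unfolding directed_forest_def by blast
  define s where "s = q(r := p r)"
  have sV: "\<And>x. x \<in> V \<Longrightarrow> s x \<in> V" using pV qV r unfolding s_def by auto
  have sVn: "\<And>n x. x \<in> V \<Longrightarrow> (s ^^ n) x \<in> V"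
  proof -
    fix n x assume "x \<in> V" then show "(s ^^ n) x \<in> V" by (induction n) (auto simp: sV)
  qed
  have cyc: "s w = w" if w: "w \<in> V" "n \<ge> 1" "(s ^^ n) w = w" for n w
  proof (cases "\<exists>k<n. (s ^^ k) w = r")
    case True
    then obtain k where k: "(s ^^ k) w = r" by blast
    have sr: "(s ^^ n) r = r"
    proof -
      have "(s ^^ n) r = (s ^^ n) ((s ^^ k) w)" using k by simp
      also have "\<dots> = (s ^^ k) ((s ^^ n) w)" by (rule funpow_swap)
      finally show ?thesis using w(3) k by simp
    qed
    have claim: "i \<ge> 1 \<Longrightarrow> \<exists>j\<ge>1. (s ^^ i) r = (p ^^ j) r" for i :: nat
    proof (induction i)
      case 0 then show ?case by simp
    next
      case (Suc i)
      show ?case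
      proof (cases "i = 0")
        case True
        then show ?thesis by (intro exI[of _ 1]) (simp add: s_def)
      next
        case False
        then obtain j where j: "j \<ge> 1" "(s ^^ i) r = (p ^^ j) r" using Suc.IH by auto
        have xV: "(s ^^ i) r \<in> V" using sVn r by blast
        show ?thesis
        proof (cases "(s ^^ i) r = r")
          case True
          then have "(s ^^ Suc i) r = (p ^^ 1) r" by (simp add: s_def)
          then show ?thesis by auto
        next
          case False
          then have "(s ^^ Suc i) r = q ((s ^^ i) r)" by (simp add: s_def)
          moreover have "q ((s ^^ i) r) = (s ^^ i) r \<or> q ((s ^^ i) r) = p ((s ^^ i) r)"
            using qth xV unfolding thinner_def by blast
          ultimately have "(s ^^ Suc i) r = (p ^^ j) r \<or> (s ^^ Suc i) r = (p ^^ Suc j) r"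
            using j by auto
          then show ?thesis using j by (meson le_SucI)
        qed
      qed
    qed
    then obtain j where "j \<ge> 1" "(s ^^ n) r = (p ^^ j) r" using w(2) claim by blast
    then have "p r = r" using pcyc[OF r(1), of j] sr by simp
    then show ?thesis using pr by blast
  next
    case False
    have "k \<le> n \<Longrightarrow> (s ^^ k) w = (q ^^ k) w" for k
    proof (induction k)
      case 0 then show ?case by simp
    next
      case (Suc k)
      then have ne: "(s ^^ k) w \<noteq> r" using False by auto
      have "(s ^^ Suc k) w = s ((s ^^ k) w)" by simp
      also have "\<dots> = q ((s ^^ k) w)" using ne by (simp add: s_def)
      also have "\<dots> = q ((q ^^ k) w)" using Suc by simp
      finally show ?case by simp
    qed
    then have "(q ^^ n) w = w" using w by simp
    then have "q w = w" using qcyc w by blast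
    moreover have "w \<noteq> r"
    proof
      assume "w = r"
      then have "(s ^^ 0) w = r" by simp
      with False w(2) show False by auto
    qed
    ultimately show ?thesis by (simp add: s_def)
  qed
  have sdf: "directed_forest V s"
    unfolding directed_forest_def using Vne sV cyc by blast
  have "q ` V = V" using ls unfolding is_leafless_support_def leafless_def by blast
  have sl: "leafless V s"
    unfolding leafless_def
  proof
    show "s ` V \<subseteq> V" using sV by blast
    show "V \<subseteq> s ` V"
    proof
      fix x assume "x \<in> V"
      then obtain u where u: "u \<in> V" "x = q u" using \<open>q ` V = V\<close> by blast
      show "x \<in> s ` V"
      proof (cases "u = r")
        case True
        then have "x = s v" using u r v by (simp add: s_def)
        then show ?thesis using v by blast
      next
        case False
        then show ?thesis using u by (auto simp: s_def)
      qed
    qed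
  qed
  have sth: "thinner V s p" using qth unfolding thinner_def s_def by auto
  have "thinner V s q" using mx sdf sl sth by blast
  then have "s r = r \<or> s r = q r" using r unfolding thinner_def by blast
  then show False using pr r by (simp add: s_def)
qed

lemma part1:
  assumes df: "directed_forest V p" and ls: "is_leafless_support V p q"
  shows "v \<in> V \<Longrightarrow> q v \<noteq> v \<Longrightarrow> (q ^^ n) v = (p ^^ n) v"
proof (induction n arbitrary: v)
  case 0 then show ?case by simp
next
  case (Suc n)
  have qth: "thinner V q p" and qf: "directed_forest V q"
    using ls unfolding is_leafless_support_def by auto
  have qv: "q v = p v" using qth Suc.prems unfolding thinner_def by blast
  have qvV: "q v \<in> V" using qf Suc.prems unfolding directed_forest_def by blast
  show ?case
  proof (cases "q (q v) = q v")
    case True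
    have "p (q v) = q v" using key[OF df ls qvV True Suc.prems(1) Suc.prems(2)[symmetric] refl] .
    then have "\<And>m. (p ^^ m) (q v) = q v" "\<And>m. (q ^^ m) (q v) = q v"
      using True by (simp_all add: funpow_fixpoint)
    then show ?thesis using qv by (simp add: funpow_Suc_right del: funpow.simps)
  next
    case False
    then have "(q ^^ n) (q v) = (p ^^ n) (q v)" using Suc.IH qvV by blast
    then show ?thesis using qv by (simp add: funpow_Suc_right del: funpow.simps)
  qed
qed

theorem corollary4p6:
  fixes V :: "'a set" and p q :: "'a \<Rightarrow> 'a"
  assumes "directed_forest V p"
    and "is_leafless_support V p q"
  shows "(\<forall>v\<in>V - roots V q. \<forall>n::nat. (q ^^ n) v = (p ^^ n) v)
    \<and> (\<forall>v1\<in>V - roots V q. \<forall>v2\<in>V - roots V q. same_tree p v1 v2 \<longrightarrow> same_tree q v1 v2)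
    \<and> (directed_tree V p \<longrightarrow>
         (\<forall>W1\<in>trees V q. \<forall>W2\<in>trees V q.
            \<not> degenerate W1 \<and> \<not> degenerate W2 \<longrightarrow> W1 = W2))"
proof -
  have P1: "\<forall>v\<in>V - roots V q. \<forall>n::nat. (q ^^ n) v = (p ^^ n) v"
    using part1[OF assms] unfolding roots_def by blast
  have P2: "\<forall>v1\<in>V - roots V q. \<forall>v2\<in>V - roots V q. same_tree p v1 v2 \<longrightarrow> same_tree q v1 v2"
  proof (intro ballI impI)
    fix v1 v2 assume v: "v1 \<in> V - roots V q" "v2 \<in> V - roots V q" "same_tree p v1 v2"
    then obtain m n where "(p ^^ m) v1 = (p ^^ n) v2" unfolding same_tree_def by blast
    then have "(q ^^ m) v1 = (q ^^ n) v2" using P1 v by simp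
    then show "same_tree q v1 v2" unfolding same_tree_def by blast
  qed
  have nd: "\<exists>b\<in>V - roots V q. W = tree_of V q b" if W: "W \<in> trees V q" "\<not> degenerate W" for W
  proof -
    obtain a where a: "a \<in> V" "W = tree_of V q a" using W unfolding trees_def by blast
    have "a \<in> W" using a st_refl unfolding tree_of_def by fastforce
    then obtain w where w: "w \<in> W" "w \<noteq> a" using W(2) unfolding degenerate_def by blast
    then have wV: "w \<in> V" and st: "same_tree q a w" using a unfolding tree_of_def by auto
    show ?thesis
    proof (cases "q a = a")
      case False then show ?thesis using a unfolding roots_def by blast
    next
      case True
      have "q w \<noteq> w"
      proof
        assume "q w = w"
        then show False using st True w(2) unfolding same_tree_def by (simp add: funpow_fixpoint)
      qed
      then show ?thesis using wV a(2) tree_of_eq[OF st] unfolding roots_def by blast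
    qed
  qed
  have P3: "directed_tree V p \<longrightarrow>
         (\<forall>W1\<in>trees V q. \<forall>W2\<in>trees V q.
            \<not> degenerate W1 \<and> \<not> degenerate W2 \<longrightarrow> W1 = W2)"
  proof (intro impI ballI)
    fix W1 W2 assume dt: "directed_tree V p" and W: "W1 \<in> trees V q" "W2 \<in> trees V q"
      "\<not> degenerate W1 \<and> \<not> degenerate W2"
    obtain b1 where b1: "b1 \<in> V - roots V q" "W1 = tree_of V q b1" using nd W by blast
    obtain b2 where b2: "b2 \<in> V - roots V q" "W2 = tree_of V q b2" using nd W by blast
    have "tree_of V p b1 \<in> trees V p" "tree_of V p b2 \<in> trees V p"
      using b1 b2 unfolding trees_def by auto
    then have "tree_of V p b1 = tree_of V p b2" using dt unfolding directed_tree_def by blast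
    moreover have "b2 \<in> tree_of V p b2" using b2 st_refl unfolding tree_of_def by fastforce
    ultimately have "same_tree p b1 b2" unfolding tree_of_def by blast
    then have "same_tree q b1 b2" using P2 b1 b2 by blast
    then show "W1 = W2" using b1(2) b2(2) tree_of_eq by simp
  qed
  show ?thesis using P1 P2 P3 by blast
qed

end
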